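(* For any discrete random variable $X$, there exists a conditional distribution $p_{W|X}$ such that the resulting random variable $W$ has marginal distribution $\mathrm{Geom}(1/2)$ (i.e., $\mathbb{P}(W=w)=2^{-w}$ for $w=1,2,\dots$), and the conditional distribution $p_{X|W=w}$ is a dyadic distribution for all $w\ge1$.
   Context: A dyadic distribution is a probability distribution $p$ on a discrete set in which each nonzero probability $p(x)$ is an integer power of two. *)

theory Defs
  imports "HOL-Probability.Probability"
begin

definition dyadic_pmf :: "'a pmf \<Rightarrow> bool" where
  "dyadic_pmf d \<longleftrightarrow> (\<forall>x \<in> set_pmf d. \<exists>k::int. pmf d x = 2 powi k)"

text \<open>Joint distribution of (X, W) from the law of X and a channel K = p_{W|X}.\<close>
definition joint_pmf :: "'a pmf \<Rightarrow> ('a \<Rightarrow> nat pmf) \<Rightarrow> ('a \<times> nat) pmf" where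
  "joint_pmf p K = bind_pmf p (\<lambda>x. map_pmf (\<lambda>w. (x, w)) (K x))"

definition cond_X_given_W :: "('a \<times> nat) pmf \<Rightarrow> nat \<Rightarrow> 'a pmf" where
  "cond_X_given_W q w = map_pmf fst (cond_pmf q {z. snd z = w})"

end

theory Submission
  imports Defs
begin


lemma pow2_dvd:
  fixes a b :: nat
  assumes "\<exists>e. a = 2^e" "\<exists>e. b = 2^e" "a \<le> b"
  shows "a dvd b"
proof -
  obtain e1 e2 where "a = 2^e1" "b = 2^e2" using assms by auto
  with assms(3) have "e1 \<le> e2" by (simp add: power_le_imp_le_exp)
  then show ?thesis using \<open>a = 2^e1\<close> \<open>b = 2^e2\<close> by (simp add: le_imp_power_dvd)
qed

lemma subset_sum_pow2:
  fixes a :: "'a \<Rightarrow> nat"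
  assumes "finite F" "\<forall>x\<in>F. \<exists>e. a x = 2^e" "\<forall>x\<in>F. a x dvd T" "T \<le> sum a F"
  shows "\<exists>G\<subseteq>F. sum a G = T"
  using assms
proof (induction "card F" arbitrary: F T rule: less_induct)
  case less
  show ?case
  proof (cases "F = {}")
    case True
    then show ?thesis using less.prems by auto
  next
    case False
    define m where "m = Max (a ` F)"
    have "m \<in> a ` F" unfolding m_def using False less.prems(1) by (intro Max_in) auto
    then obtain x where x: "x \<in> F" "a x = m" by auto
    have le: "\<forall>y\<in>F. a y \<le> a x" using x less.prems(1) unfolding m_def by auto
    have dv: "\<forall>y\<in>F. a y dvd a x" using le x less.prems(2) by (auto intro: pow2_dvd)
    show ?thesis
    proof (cases "a x \<le> T")
      case True
      have c: "card (F - {x}) < card F" using x less.prems(1) by (intro card_Diff1_less)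
      have s: "sum a F = a x + sum a (F - {x})" using x less.prems(1) by (simp add: sum.remove)
      have "\<exists>G\<subseteq>F - {x}. sum a G = T - a x"
        apply (rule less.hyps[OF c])
        using less.prems dv x True s by (auto intro: dvd_diff_nat)
      then obtain G where G: "G \<subseteq> F - {x}" "sum a G = T - a x" by auto
      have "finite G" using G less.prems(1) by (meson finite_Diff finite_subset)
      moreover have "x \<notin> G" using G by auto
      ultimately have "sum a (insert x G) = T" using G True by simp
      then show ?thesis using G x by blast
    next
      case False
      have "T = 0"
      proof (rule ccontr)
        assume "T \<noteq> 0"
        then have "a x \<le> T" using less.prems(3) x by (auto intro: dvd_imp_le)
        then show False using False by simp
      qed
      then show ?thesis by auto
    qed
  qed
qed

definition dy :: "real \<Rightarrow> bool" where "dy v \<longleftrightarrow> v = 0 \<or> (\<exists>k::int. v = 2 powi k)"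

lemma half_pow_dy: "dy ((1/2::real)^m)"
  unfolding dy_def by (intro disjI2 exI[of _ "- int m"]) (simp add: power_int_minus power_one_over inverse_eq_divide)

lemma key1:
  fixes r :: "'a \<Rightarrow> real"
  assumes nn: "\<And>x. r x \<ge> 0" and hs: "(r has_sum 1) UNIV"
  shows "\<exists>s. (\<forall>x. 0 \<le> s x \<and> s x \<le> r x \<and> dy (s x)) \<and> (s has_sum (1/2)) UNIV"
proof (cases "\<exists>x0. r x0 \<ge> 1/2")
  case True
  then obtain x0 where x0: "r x0 \<ge> 1/2" by auto
  define s where "s = (\<lambda>x. if x = x0 then (1/2::real) else 0)"
  have "(s has_sum (1/2)) UNIV" by (rule has_sum_finite_neutralI[of "{x0}"]) (auto simp: s_def)
  moreover have "dy (1/2)" using half_pow_dy[of 1] by simp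
  moreover have "dy 0" by (simp add: dy_def)
  ultimately have "(\<forall>x. 0 \<le> s x \<and> s x \<le> r x \<and> dy (s x)) \<and> (s has_sum (1/2)) UNIV"
    using x0 nn by (auto simp: s_def)
  then show ?thesis by blast
next
  case False
  hence lt: "\<And>x. r x < 1/2" by (meson not_le)
  define n where "n x = (LEAST n::nat. (1/2::real)^n \<le> r x)" for x
  define h where "h x = (if r x > 0 then (1/2::real)^(n x) else 0)" for x
  have ex: "\<exists>n::nat. (1/2::real)^n \<le> r x" if "r x > 0" for x
    using real_arch_pow_inv[of "r x" "1/2"] that by (auto intro: less_imp_le)
  have hn1: "(1/2::real)^(n x) \<le> r x" if "r x > 0" for x
    unfolding n_def by (rule LeastI_ex[OF ex[OF that]])
  have hn2: "n x \<ge> 2" if "r x > 0" for x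
  proof (rule ccontr)
    assume "\<not> 2 \<le> n x" then have "n x = 0 \<or> n x = 1" by auto
    then show False using hn1[OF that] lt[of x] by auto
  qed
  have hn3: "r x < 2 * (1/2)^(n x)" if "r x > 0" for x
  proof -
    have "n x - 1 < n x" using hn2[OF that] by simp
    then have "\<not> (1/2::real)^(n x - 1) \<le> r x" unfolding n_def by (rule not_less_Least)
    then have "r x < (1/2)^(n x - 1)" by simp
    also have "(1/2::real)^(n x - 1) = 2 * (1/2)^(n x)" using hn2[OF that] by (cases "n x") auto
    finally show ?thesis .
  qed
  have "\<exists>x0. r x0 > 0"
  proof (rule ccontr)
    assume "\<not> (\<exists>x0. r x0 > 0)"
    then have "\<And>x. r x = 0" using nn by (metis less_eq_real_def)
    then have "r = (\<lambda>_. 0)" by auto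
    then have "(r has_sum 0) UNIV" by simp
    then show False using hs has_sum_unique by force
  qed
  then obtain x0 where x0: "r x0 > 0" by blast
  define \<delta> where "\<delta> = h x0 - r x0 / 2"
  have \<delta>: "\<delta> > 0" using hn3[OF x0] x0 by (simp add: \<delta>_def h_def)
  obtain F0 where F0: "finite F0" "dist (sum r F0) 1 \<le> \<delta>"
    using has_sum_finite_approximation[OF hs \<delta>] by auto
  define Y where "Y = insert x0 F0"
  have finY: "finite Y" using F0 by (simp add: Y_def)
  have "sum r F0 \<le> sum r Y" unfolding Y_def using F0 nn by (intro sum_mono2) auto
  then have rY: "sum r Y \<ge> 1 - \<delta>" using F0(2) by (auto simp: dist_real_def)
  have hr: "h x - r x / 2 \<ge> 0" for x
    using hn3[of x] nn[of x] by (cases "r x > 0") (auto simp: h_def)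
  have "h x0 - r x0/2 \<le> (\<Sum>x\<in>Y. h x - r x/2)"
    by (rule member_le_sum) (use hr finY in \<open>auto simp: Y_def\<close>)
  then have "\<delta> \<le> sum h Y - sum r Y / 2" by (simp add: \<delta>_def sum_subtractf sum_divide_distrib)
  hence hY: "sum h Y > 1/2" using rY \<delta> by linarith
  define F where "F = {x\<in>Y. r x > 0}"
  have finF: "finite F" using finY by (simp add: F_def)
  have hF: "sum h F = sum h Y" unfolding F_def
    by (rule sum.mono_neutral_left) (auto simp: h_def finY)
  have Fne: "F \<noteq> {}" using hF hY by auto
  define N where "N = Max (n ` F)"
  have nN: "n x \<le> N" if "x \<in> F" for x using finF that by (simp add: N_def)
  have N2: "N \<ge> 2"
  proof -
    obtain y where y: "y \<in> F" using Fne by blast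
    then have "r y > 0" by (simp add: F_def)
    then have "n y \<ge> 2" by (rule hn2)
    then show ?thesis using nN[OF y] by linarith
  qed
  then obtain M where M: "N = Suc M" by (cases N) auto
  define a where "a x = (2::nat)^(N - n x)" for x
  have ha: "h x = real (a x) / 2^N" if "x \<in> F" for x
  proof -
    have "(2::real)^N = 2^(N - n x) * 2^(n x)" using nN[OF that] by (simp flip: power_add)
    then show ?thesis using that by (simp add: a_def h_def F_def power_one_over)
  qed
  have suma: "real (sum a F) = 2^N * sum h F"
    by (simp add: sum_distrib_left ha)
  have "\<exists>G\<subseteq>F. sum a G = 2^(N-1)"
  proof (rule subset_sum_pow2[OF finF])
    show "\<forall>x\<in>F. \<exists>e. a x = 2^e" by (auto simp: a_def)
    show "\<forall>x\<in>F. a x dvd 2^(N-1)"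
    proof
      fix x assume "x \<in> F"
      then have "n x \<ge> 2" using hn2 by (auto simp: F_def)
      then show "a x dvd 2^(N-1)" unfolding a_def by (intro le_imp_power_dvd) simp
    qed
    have "real (2^(N-1)) = 2^N / 2" by (simp add: M)
    also have "\<dots> < 2^N * sum h F" using hY hF by simp
    finally show "2^(N-1) \<le> sum a F" using suma by linarith
  qed
  then obtain G where G: "G \<subseteq> F" "sum a G = 2^(N-1)" by auto
  define s where "s x = (if x \<in> G then h x else 0)" for x
  have finG: "finite G" using G finF by (metis finite_subset)
  have "sum s G = 1/2"
  proof -
    have "sum s G = sum (\<lambda>x. real (a x) / 2^N) G"
      using G by (intro sum.cong) (auto simp: s_def ha)
    also have "\<dots> = real (sum a G) / 2^N" by (simp add: sum_divide_distrib)
    also have "\<dots> = 1/2" using G by (simp add: M)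
    finally show ?thesis .
  qed
  then have "(s has_sum (1/2)) UNIV"
    by (intro has_sum_finite_neutralI[OF finG]) (auto simp: s_def)
  moreover have "0 \<le> s x \<and> s x \<le> r x \<and> dy (s x)" for x
    using G hn1[of x] nn[of x] half_pow_dy[of "n x"]
    by (auto simp: s_def h_def F_def dy_def)
  ultimately show ?thesis by blast
qed



lemma pmf_bind_infsum: "pmf (bind_pmf p f) y = infsum (\<lambda>x. pmf p x * pmf (f x) y) UNIV"
proof -
  have abs: "Infinite_Set_Sum.abs_summable_on (\<lambda>x. pmf p x * pmf (f x) y) UNIV"
  proof (rule abs_summable_on_comparison_test'[OF pmf_abs_summable])
    fix x
    have "norm (pmf p x * pmf (f x) y) = pmf p x * pmf (f x) y" by simp
    also have "\<dots> \<le> pmf p x * 1" by (intro mult_left_mono pmf_le_1 pmf_nonneg)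
    finally show "norm (pmf p x * pmf (f x) y) \<le> pmf p x" by simp
  qed
  have "pmf (bind_pmf p f) y = infsetsum (\<lambda>x. pmf p x * pmf (f x) y) UNIV"
    unfolding pmf_bind pmf_expectation_eq_infsetsum by (rule refl)
  also have "\<dots> = infsum (\<lambda>x. pmf p x * pmf (f x) y) UNIV" by (rule infsetsum_infsum[OF abs])
  finally show ?thesis .
qed

lemma pmf_has_sum: "(pmf p has_sum 1) UNIV"
proof -
  have a: "Infinite_Set_Sum.abs_summable_on (pmf p) UNIV" by (rule pmf_abs_summable)
  then have "Infinite_Sum.abs_summable_on (pmf p) UNIV" by (simp only: abs_summable_equivalent)
  then have sm: "pmf p summable_on UNIV" by (rule abs_summable_summable)
  have "infsetsum (pmf p) UNIV = 1" by (rule infsetsum_pmf_eq_1) simp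
  then have "infsum (pmf p) UNIV = 1" using infsetsum_infsum[OF a] by simp
  then show ?thesis using sm unfolding has_sum_iff by blast
qed

lemma dy_mult:
  assumes "dy a" "dy b" shows "dy (a * b)"
proof (cases "a = 0 \<or> b = 0")
  case True then have "a * b = 0" by auto
  then show ?thesis unfolding dy_def by blast
next
  case False
  then have "a \<noteq> 0" "b \<noteq> 0" by auto
  obtain k1 :: int where "a = 2 powi k1" using assms(1) \<open>a \<noteq> 0\<close> unfolding dy_def by blast
  obtain k2 :: int where "b = 2 powi k2" using assms(2) \<open>b \<noteq> 0\<close> unfolding dy_def by blast
  note this \<open>a = _\<close>
  then have "a * b = 2 powi (k1 + k2)" by (simp add: power_int_add)
  then show ?thesis unfolding dy_def by blast
qed

lemma dy_2pow: "dy ((2::real)^m)"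
  unfolding dy_def by (intro disjI2 exI[of _ "int m"]) simp

lemma key:
  fixes r :: "'a \<Rightarrow> real"
  assumes nn: "\<And>x. r x \<ge> 0" and hs: "(r has_sum (2 * (1/2)^m)) UNIV"
  shows "\<exists>s. (\<forall>x. 0 \<le> s x \<and> s x \<le> r x \<and> dy (s x)) \<and> (s has_sum ((1/2)^m)) UNIV"
proof -
  define c :: real where "c = 2 * (1/2)^m"
  have c: "c > 0" by (simp add: c_def)
  have "((\<lambda>x. (1/c) * r x) has_sum ((1/c) * c)) UNIV"
    using hs unfolding c_def[symmetric] by (rule has_sum_cmult_right)
  then have h1: "((\<lambda>x. (1/c) * r x) has_sum 1) UNIV" using c by simp
  have nn': "(1/c) * r x \<ge> 0" for x using nn[of x] c by simp
  then obtain s' where s': "\<forall>x. 0 \<le> s' x \<and> s' x \<le> (1/c) * r x \<and> dy (s' x)"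
    "(s' has_sum (1/2)) UNIV"
    using key1[of "\<lambda>x. (1/c) * r x", OF nn' h1] by blast
  have hsum: "((\<lambda>x. c * s' x) has_sum (c * (1/2))) UNIV" using s'(2) by (rule has_sum_cmult_right)
  have eq: "c * (1/2) = (1/2)^m" by (simp add: c_def)
  have dc: "dy c" unfolding c_def by (intro dy_mult half_pow_dy) (use dy_2pow[of 1] in simp)
  have b1: "0 \<le> c * s' x \<and> c * s' x \<le> r x" for x
  proof -
    have a: "0 \<le> s' x" "s' x \<le> (1/c) * r x" using s'(1) by blast+
    then have "c * s' x \<le> c * ((1/c) * r x)" using c by (intro mult_left_mono) auto
    also have "\<dots> = r x" using c by simp
    finally show ?thesis using a c by simp
  qed
  have b2: "dy (c * s' x)" for x using s'(1) dc by (intro dy_mult) blast+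
  have A1: "\<forall>x. 0 \<le> c * s' x \<and> c * s' x \<le> r x \<and> dy (c * s' x)" using b1 b2 by blast
  have A2: "((\<lambda>x. c * s' x) has_sum ((1/2)^m)) UNIV" using hsum unfolding eq .
  show ?thesis by (rule exI[of _ "\<lambda>x. c * s' x"], rule conjI[OF A1 A2])
qed


definition good :: "('a \<Rightarrow> real) \<Rightarrow> nat \<Rightarrow> ('a \<Rightarrow> real) \<Rightarrow> bool" where
  "good r n s \<longleftrightarrow> (\<forall>x. 0 \<le> s x \<and> s x \<le> r x \<and> dy (s x)) \<and> (s has_sum ((1/2)^(Suc n))) UNIV"

definition sel :: "('a \<Rightarrow> real) \<Rightarrow> nat \<Rightarrow> ('a \<Rightarrow> real)" where
  "sel r n = (SOME s. good r n s)"

lemma sel_good: assumes e: "\<exists>s. good r n s" shows "good r n (sel r n)"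
  unfolding sel_def using e by (rule someI_ex)

primrec rem :: "('a \<Rightarrow> real) \<Rightarrow> nat \<Rightarrow> ('a \<Rightarrow> real)" where
  "rem p0 0 = p0"
| "rem p0 (Suc n) = (\<lambda>x. rem p0 n x - sel (rem p0 n) n x)"

lemma good_ex:
  assumes "\<And>x. r x \<ge> 0" "(r has_sum (1/2)^n) UNIV"
  shows "\<exists>s. good r n s"
proof -
  have e: "(1/2::real)^n = 2 * (1/2)^(Suc n)" by simp
  have h: "(r has_sum (2 * (1/2)^(Suc n))) UNIV" using assms(2) unfolding e .
  show ?thesis unfolding good_def by (rule key[OF assms(1) h])
qed

lemma rem_inv:
  assumes "\<And>x. p0 x \<ge> 0" "(p0 has_sum 1) UNIV"
  shows "(\<forall>x. rem p0 n x \<ge> 0) \<and> (rem p0 n has_sum (1/2)^n) UNIV \<and> good (rem p0 n) n (sel (rem p0 n) n)"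
proof (induction n)
  case 0
  have nn: "\<And>x. rem p0 0 x \<ge> 0" using assms(1) by simp
  have hs: "(rem p0 0 has_sum (1/2)^0) UNIV" using assms(2) by simp
  show ?case using nn hs sel_good[OF good_ex[OF nn hs]] by blast
next
  case (Suc n)
  let ?r = "rem p0 n" and ?s = "sel (rem p0 n) n"
  have g: "good ?r n ?s" using Suc by blast
  have nn: "\<And>x. rem p0 (Suc n) x \<ge> 0" using g by (simp add: good_def)
  define t :: real where "t = (1/2)^(Suc n)"
  define u :: real where "u = (1/2)^n"
  have "(?s has_sum t) UNIV" using g by (simp add: good_def t_def)
  then have "((\<lambda>x. - ?s x) has_sum (- t)) UNIV" by (simp add: has_sum_uminus)
  moreover have "(?r has_sum u) UNIV" using Suc by (simp add: u_def)
  ultimately have "((\<lambda>x. ?r x + - ?s x) has_sum (u + - t)) UNIV"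
    by (intro has_sum_add)
  moreover have "u + - t = t" by (simp add: u_def t_def)
  ultimately have hs: "(rem p0 (Suc n) has_sum (1/2)^(Suc n)) UNIV" by (simp add: t_def)
  show ?case using nn hs sel_good[OF good_ex[OF nn hs]] by blast
qed


lemma rem_facts:
  assumes nn0: "\<And>x. p0 x \<ge> 0" and hs0: "(p0 has_sum 1) UNIV"
  shows "rem p0 n x = p0 x - (\<Sum>i<n. sel (rem p0 i) i x)"
    and "0 \<le> sel (rem p0 n) n x" "sel (rem p0 n) n x \<le> rem p0 n x" "dy (sel (rem p0 n) n x)"
    and "(sel (rem p0 n) n has_sum (1/2)^(Suc n)) UNIV"
    and "0 \<le> rem p0 n x" "rem p0 n x \<le> (1/2)^n"
proof -
  show "rem p0 n x = p0 x - (\<Sum>i<n. sel (rem p0 i) i x)"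
    by (induction n) auto
  have inv: "(\<forall>x. rem p0 n x \<ge> 0) \<and> (rem p0 n has_sum (1/2)^n) UNIV \<and> good (rem p0 n) n (sel (rem p0 n) n)"
    by (rule rem_inv[OF nn0 hs0])
  then show "0 \<le> sel (rem p0 n) n x" "sel (rem p0 n) n x \<le> rem p0 n x" "dy (sel (rem p0 n) n x)"
    "(sel (rem p0 n) n has_sum (1/2)^(Suc n)) UNIV" "0 \<le> rem p0 n x"
    unfolding good_def by blast+
  have h1: "((\<lambda>y. if y = x then rem p0 n x else 0) has_sum rem p0 n x) UNIV"
    by (rule has_sum_finite_neutralI[of "{x}"]) auto
  show "rem p0 n x \<le> (1/2)^n"
    by (rule has_sum_mono_neutral[OF h1, of "rem p0 n"]) (use inv in auto)
qed

lemma sel_sums: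
  assumes nn0: "\<And>x. p0 x \<ge> 0" and hs0: "(p0 has_sum 1) UNIV"
  shows "(\<lambda>n. sel (rem p0 n) n x) sums p0 x"
proof -
  have r0: "(\<lambda>n. rem p0 n x) \<longlonglongrightarrow> 0"
  proof (rule tendsto_sandwich[of "\<lambda>_. 0" _ _ "\<lambda>n. (1/2::real)^n"])
    show "\<forall>\<^sub>F n in sequentially. 0 \<le> rem p0 n x" using rem_facts(6)[OF nn0 hs0] by simp
    show "\<forall>\<^sub>F n in sequentially. rem p0 n x \<le> (1/2)^n" using rem_facts(7)[OF nn0 hs0] by simp
    show "(\<lambda>n. (1/2::real)^n) \<longlonglongrightarrow> 0" by (rule LIMSEQ_realpow_zero) auto
  qed simp
  have "(\<lambda>n. p0 x - rem p0 n x) \<longlonglongrightarrow> p0 x - 0" by (intro tendsto_diff tendsto_const r0)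
  moreover have "(\<Sum>i<n. sel (rem p0 i) i x) = p0 x - rem p0 n x" for n
    using rem_facts(1)[OF nn0 hs0, of n x] by simp
  ultimately show ?thesis unfolding sums_def by simp
qed


lemma pmf_joint_point:
  "pmf (joint_pmf p K) (x, w) = pmf p x * pmf (K x) w"
proof -
  have e: "pmf p x' * pmf (map_pmf (\<lambda>w. (x', w)) (K x')) (x, w) =
        (if x' = x then pmf p x * pmf (K x) w else 0)" for x'
  proof (cases "x' = x")
    case True
    have "inj (\<lambda>w. (x, w))" by (auto simp: inj_on_def)
    then have "pmf (map_pmf (\<lambda>w. (x, w)) (K x)) ((\<lambda>w. (x, w)) w) = pmf (K x) w"
      by (rule pmf_map_inj')
    then show ?thesis using True by simp
  next
    case False
    have "(x, w) \<notin> (\<lambda>w. (x', w)) ` set_pmf (K x')" using False by auto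
    then have "pmf (map_pmf (\<lambda>w. (x', w)) (K x')) (x, w) = 0" by (rule pmf_map_outside)
    then show ?thesis using False by simp
  qed
  have "((\<lambda>x'. if x' = x then pmf p x * pmf (K x) w else 0) has_sum (pmf p x * pmf (K x) w)) UNIV"
    by (rule has_sum_finite_neutralI[of "{x}"]) auto
  then have "infsum (\<lambda>x'. if x' = x then pmf p x * pmf (K x) w else 0) UNIV = pmf p x * pmf (K x) w"
    by (rule infsumI)
  then show ?thesis unfolding joint_pmf_def pmf_bind_infsum e .
qed

lemma map_snd_joint: "map_pmf snd (joint_pmf p K) = bind_pmf p K"
  by (simp add: joint_pmf_def map_bind_pmf map_pmf_comp)

lemma pmf_map_fst_cond:
  assumes ne: "set_pmf J \<inter> {z. snd z = w} \<noteq> {}"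
  shows "pmf (cond_X_given_W J w) x = pmf J (x, w) / measure J {z. snd z = w}"
proof -
  let ?C = "cond_pmf J {z. snd z = w}"
  have sC: "set_pmf ?C = set_pmf J \<inter> {z. snd z = w}" by (rule set_cond_pmf[OF ne])
  have "pmf (cond_X_given_W J w) x = measure ?C (fst -` {x})"
    unfolding cond_X_given_W_def by (rule pmf_map)
  also have "\<dots> = measure ?C (fst -` {x} \<inter> set_pmf ?C)" by (rule measure_Int_set_pmf[symmetric])
  also have "fst -` {x} \<inter> set_pmf ?C = {(x, w)} \<inter> set_pmf ?C" using sC by auto
  also have "measure ?C ({(x, w)} \<inter> set_pmf ?C) = measure ?C {(x, w)}" by (rule measure_Int_set_pmf)
  also have "\<dots> = pmf ?C (x, w)" by (rule measure_pmf_single)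
  also have "\<dots> = pmf J (x, w) / measure J {z. snd z = w}" by (simp add: pmf_cond[OF ne])
  finally show ?thesis .
qed


theorem lemma1:
  fixes p :: "'a pmf"
  shows "\<exists>K :: 'a \<Rightarrow> nat pmf.
           (\<forall>w::nat. pmf (map_pmf snd (joint_pmf p K)) w = (if w \<ge> 1 then (1/2) ^ w else 0))
         \<and> (\<forall>w::nat. w \<ge> 1 \<longrightarrow> dyadic_pmf (cond_X_given_W (joint_pmf p K) w))"
proof -
  define p0 where "p0 = pmf p"
  have nn0: "\<And>x. p0 x \<ge> 0" by (simp add: p0_def)
  have hs0: "(p0 has_sum 1) UNIV" unfolding p0_def by (rule pmf_has_sum)
  define S where "S n = sel (rem p0 n) n" for n
  have S0: "0 \<le> S n x" for n x unfolding S_def by (rule rem_facts(2)[OF nn0 hs0])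
  have Sdy: "dy (S n x)" for n x unfolding S_def by (rule rem_facts(4)[OF nn0 hs0])
  have Shs: "(S n has_sum (1/2)^(Suc n)) UNIV" for n unfolding S_def by (rule rem_facts(5)[OF nn0 hs0])
  have Sle: "S n x \<le> p0 x" for n x
  proof -
    have "S n x \<le> rem p0 n x" unfolding S_def by (rule rem_facts(3)[OF nn0 hs0])
    also have "rem p0 n x = p0 x - (\<Sum>i<n. sel (rem p0 i) i x)" by (rule rem_facts(1)[OF nn0 hs0])
    also have "\<dots> \<le> p0 x" using rem_facts(2)[OF nn0 hs0] by (simp add: sum_nonneg)
    finally show ?thesis .
  qed
  have Ssums: "(\<lambda>n. S n x) sums p0 x" for x unfolding S_def by (rule sel_sums[OF nn0 hs0])
  define Q where "Q w x = (if w = 0 then 0 else S (w - 1) x)" for w x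
  define K where "K x = (if p0 x > 0 then embed_pmf (\<lambda>w. Q w x / p0 x) else return_pmf 1)" for x
  have pK: "pmf p x * pmf (K x) w = Q w x" for x w
  proof (cases "p0 x > 0")
    case True
    define f where "f w = Q w x / p0 x" for w
    have fnn: "\<And>w. 0 \<le> f w" using True S0 by (simp add: f_def Q_def)
    have "(\<lambda>n. S n x / p0 x) sums (p0 x / p0 x)" by (intro sums_divide Ssums)
    then have "(\<lambda>n. f (Suc n)) sums 1" using True by (simp add: f_def Q_def)
    then have "f sums (1 + f 0)" by (rule sums_Suc)
    then have fs: "f sums 1" by (simp add: f_def Q_def)
    have "(\<integral>\<^sup>+w. ennreal (f w) \<partial>count_space UNIV) = (\<Sum>w. ennreal (f w))"
      by (rule nn_integral_count_space_nat)
    also have "\<dots> = ennreal (\<Sum>w. f w)" by (rule suminf_ennreal2[OF fnn sums_summable[OF fs]])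
    also have "\<dots> = 1" using sums_unique[OF fs] by simp
    finally have pr: "(\<integral>\<^sup>+w. ennreal (f w) \<partial>count_space UNIV) = 1" .
    have "pmf (K x) w = f w" unfolding K_def f_def using True
      by (simp add: pmf_embed_pmf[OF fnn[unfolded f_def] pr[unfolded f_def]])
    then show ?thesis using True by (simp add: f_def p0_def)
  next
    case False
    then have "p0 x = 0" using nn0[of x] by simp
    then have "Q w x = 0" using S0[of "w-1" x] Sle[of "w-1" x] by (simp add: Q_def)
    then show ?thesis using \<open>p0 x = 0\<close> by (simp add: p0_def)
  qed
  have mW: "pmf (map_pmf snd (joint_pmf p K)) w = (if w \<ge> 1 then (1/2) ^ w else 0)" for w
  proof -
    have "pmf (map_pmf snd (joint_pmf p K)) w = infsum (\<lambda>x. Q w x) UNIV"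
      unfolding map_snd_joint pmf_bind_infsum pK by (rule refl)
    also have "\<dots> = (if w \<ge> 1 then (1/2) ^ w else 0)"
    proof (cases "w = 0")
      case True then show ?thesis by (simp add: Q_def)
    next
      case False
      then obtain n where n: "w = Suc n" by (cases w) auto
      have "(S n has_sum (1/2)^(Suc n)) UNIV" by (rule Shs)
      then have "infsum (S n) UNIV = (1/2)^(Suc n)" by (rule infsumI)
      then show ?thesis using n by (simp add: Q_def)
    qed
    finally show ?thesis .
  qed
  have dyad: "dyadic_pmf (cond_X_given_W (joint_pmf p K) w)" if w1: "w \<ge> 1" for w
  proof -
    let ?J = "joint_pmf p K"
    have meas: "measure ?J {z. snd z = w} = (1/2)^w"
    proof -
      have e: "snd -` {w} = {z. snd z = w}" by auto
      have "measure ?J {z. snd z = w} = pmf (map_pmf snd ?J) w" unfolding pmf_map e by (rule refl)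
      then show ?thesis using mW[of w] w1 by simp
    qed
    have ne: "set_pmf ?J \<inter> {z. snd z = w} \<noteq> {}"
    proof
      assume e: "set_pmf ?J \<inter> {z. snd z = w} = {}"
      have "measure ?J {z. snd z = w} = measure ?J ({z. snd z = w} \<inter> set_pmf ?J)"
        by (rule measure_Int_set_pmf[symmetric])
      also have "\<dots> = 0" using e by (simp add: Int_commute)
      finally show False using meas by simp
    qed
    obtain n where n: "w = Suc n" using w1 by (cases w) auto
    have pD: "pmf (cond_X_given_W ?J w) x = S n x * 2^w" for x
    proof -
      have "pmf (cond_X_given_W ?J w) x = pmf ?J (x, w) / (1/2)^w"
        using pmf_map_fst_cond[OF ne] meas by simp
      also have "pmf ?J (x, w) = S n x" using pK[of x w] n by (simp add: pmf_joint_point Q_def)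
      finally show ?thesis by (simp add: power_one_over)
    qed
    show ?thesis unfolding dyadic_pmf_def
    proof
      fix x assume "x \<in> set_pmf (cond_X_given_W ?J w)"
      then have nz: "pmf (cond_X_given_W ?J w) x \<noteq> 0" by (simp add: set_pmf_iff)
      have "dy (S n x * 2^w)" by (intro dy_mult Sdy dy_2pow)
      then show "\<exists>k::int. pmf (cond_X_given_W ?J w) x = 2 powi k" using nz pD[of x] unfolding dy_def by auto
    qed
  qed
  show ?thesis using mW dyad by blast
qed

end
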